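(* Let $A$ be an $n\times n$ generalized tournament matrix and let $X$ be a clan of $A$. Then $\mathrm{Inv}(A,X)$ has the same principal minors as $A$, i.e. $\det \mathrm{Inv}(A,X)[Y]=\det A[Y]$ for every nonempty $Y\subseteq[n]$.
   Context: A generalized tournament matrix of order $n$ is a real $n\times n$ matrix $M=(m_{ij})$ with nonnegative entries satisfying $M+M^{t}=J_n-I_n$. Write $[n]=\{1,\ldots,n\}$; $M[Y]$ is the principal submatrix indexed by $Y$. A clan of $M$ is a subset $X\subseteq[n]$ such that for all $i,j\in X$ and $k\in[n]\setminus X$, $m_{ik}=m_{jk}$ and $m_{ki}=m_{kj}$. For $X\subseteq[n]$, $\mathrm{Inv}(M,X)$ is the matrix obtained from $M$ by replacing $m_{ij}$ by $m_{ji}$ for all $i,j\in X$. *)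

theory Defs
  imports "Jordan_Normal_Form.Determinant" "Jordan_Normal_Form.DL_Submatrix"
begin

text \<open>Indices are 0-based: [n] is rendered as {0..<n}.\<close>

definition gen_tournament :: "nat \<Rightarrow> real mat \<Rightarrow> bool" where
  "gen_tournament n M \<longleftrightarrow> M \<in> carrier_mat n n \<and>
     (\<forall>i<n. \<forall>j<n. M $$ (i,j) \<ge> 0) \<and>
     M + transpose_mat M = mat n n (\<lambda>_. 1) - 1\<^sub>m n"

definition clan :: "nat \<Rightarrow> real mat \<Rightarrow> nat set \<Rightarrow> bool" where
  "clan n M X \<longleftrightarrow> X \<subseteq> {0..<n} \<and>
     (\<forall>i\<in>X. \<forall>j\<in>X. \<forall>k\<in>{0..<n} - X.
        M $$ (i,k) = M $$ (j,k) \<and> M $$ (k,i) = M $$ (k,j))"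

definition Inv :: "real mat \<Rightarrow> nat set \<Rightarrow> real mat" where
  "Inv M X = mat (dim_row M) (dim_col M)
     (\<lambda>(i,j). if i \<in> X \<and> j \<in> X then M $$ (j,i) else M $$ (i,j))"

definition principal_submatrix :: "real mat \<Rightarrow> nat set \<Rightarrow> real mat" where
  "principal_submatrix M Y = submatrix M Y Y"

end

theory Submission
  imports Defs
begin

definition wt :: "nat set \<Rightarrow> (nat \<Rightarrow> nat \<Rightarrow> real) \<Rightarrow> (nat \<Rightarrow> nat) \<Rightarrow> real" where
  "wt U f p = of_int (sign p) * (\<Prod>i\<in>U. f i (p i))"

definition exits :: "nat set \<Rightarrow> (nat \<Rightarrow> nat) \<Rightarrow> nat set" where
  "exits X p = {x\<in>X. p x \<notin> X}"

lemma split_perm: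
  assumes u: "u permutes U" and fin: "finite U" and XU: "X \<subseteq> U" and uX: "u ` X \<subseteq> X"
  shows "(\<lambda>x. if x\<in>X then u x else x) permutes X"
    "(\<lambda>x. if x\<in>U-X then u x else x) permutes (U-X)"
    "u = (\<lambda>x. if x\<in>X then u x else x) \<circ> (\<lambda>x. if x\<in>U-X then u x else x)"
proof -
  have inj: "inj u" using u permutes_inj by blast
  have finX: "finite X" using fin XU finite_subset by blast
  have eqX: "u ` X = X"
    by (rule card_subset_eq[OF finX uX]) (metis card_image inj inj_on_subset subset_UNIV)
  have eqU: "u ` U = U" using u permutes_image by blast
  have eqK: "u ` (U - X) = U - X" using eqX eqU inj by (simp add: image_set_diff)
  have b1: "bij_betw u X X" using eqX inj by (metis bij_betw_def inj_on_subset subset_UNIV)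
  have b2: "bij_betw u (U-X) (U-X)" using eqK inj by (metis bij_betw_def inj_on_subset subset_UNIV)
  show "(\<lambda>x. if x\<in>X then u x else x) permutes X"
    by (rule bij_imp_permutes) (auto intro: bij_betw_cong[THEN iffD1, OF _ b1])
  show "(\<lambda>x. if x\<in>U-X then u x else x) permutes (U-X)"
    by (rule bij_imp_permutes) (auto intro: bij_betw_cong[THEN iffD1, OF _ b2])
  show "u = (\<lambda>x. if x\<in>X then u x else x) \<circ> (\<lambda>x. if x\<in>U-X then u x else x)"
  proof (rule ext)
    fix x
    show "u x = ((\<lambda>x. if x\<in>X then u x else x) \<circ> (\<lambda>x. if x\<in>U-X then u x else x)) x"
    proof (cases "x \<in> U")
      case True
      then show ?thesis using eqK by auto
    next
      case False
      then show ?thesis using XU permutes_not_in[OF u False] by auto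
    qed
  qed
qed

lemma transpose_twice: "p \<circ> transpose a b \<circ> transpose a b = p"
  by (auto simp: fun_eq_iff Transposition.transpose_def)

lemma sum_zero_invol:
  fixes h :: "'a \<Rightarrow> real"
  assumes "\<And>x. x \<in> S \<Longrightarrow> \<phi> x \<in> S" "\<And>x. x \<in> S \<Longrightarrow> \<phi> (\<phi> x) = x"
    "\<And>x. x \<in> S \<Longrightarrow> h (\<phi> x) = - h x"
  shows "sum h S = 0"
proof -
  have b: "bij_betw \<phi> S S" by (rule bij_betw_byWitness[of S \<phi> \<phi>]) (use assms in auto)
  have "sum h S = sum (h \<circ> \<phi>) S" using sum.reindex_bij_betw[OF b, of h] by (simp add: comp_def)
  also have "\<dots> = sum (\<lambda>x. - h x) S" by (rule sum.cong) (use assms in auto)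
  also have "\<dots> = - sum h S" by (simp add: sum_negf)
  finally show ?thesis by simp
qed

lemma cancel:
  assumes fin: "finite U" and XU: "X \<subseteq> U"
    and clan: "\<forall>i\<in>X. \<forall>j\<in>X. \<forall>k\<in>U-X. f i k = f j k"
  shows "(\<Sum>p\<in>{p. p permutes U \<and> 2 \<le> card (exits X p)}. wt U f p) = 0"
proof -
  define a1 where "a1 p = Min (exits X p)" for p
  define a2 where "a2 p = Min (exits X p - {a1 p})" for p
  define \<phi> where "\<phi> p = p \<circ> transpose (a1 p) (a2 p)" for p
  let ?S = "{p. p permutes U \<and> 2 \<le> card (exits X p)}"
  have finE: "finite (exits X p)" for p
    using fin XU by (metis (no_types, lifting) exits_def finite_subset mem_Collect_eq subsetI)
  have A: "a1 p \<in> exits X p \<and> a2 p \<in> exits X p \<and> a1 p \<noteq> a2 p" if "p \<in> ?S" for p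
  proof -
    have c: "2 \<le> card (exits X p)" using that by auto
    have ne: "exits X p \<noteq> {}" using c by auto
    have 1: "a1 p \<in> exits X p" unfolding a1_def using Min_in[OF finE ne] .
    have ne2: "exits X p - {a1 p} \<noteq> {}"
    proof
      assume "exits X p - {a1 p} = {}"
      then have "exits X p \<subseteq> {a1 p}" by auto
      then have "card (exits X p) \<le> card {a1 p}" by (intro card_mono) auto
      with c show False by simp
    qed
    have 2: "a2 p \<in> exits X p - {a1 p}" unfolding a2_def using Min_in[of "exits X p - {a1 p}"] finE ne2 by auto
    show ?thesis using 1 2 by auto
  qed
  have EU: "exits X p \<subseteq> U" for p using XU by (auto simp: exits_def)
  have exE: "exits X (\<phi> p) = exits X p" if "p \<in> ?S" for p
    using A[OF that] unfolding \<phi>_def by (auto simp: exits_def Transposition.transpose_def)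
  have phiS: "\<phi> p \<in> ?S" if "p \<in> ?S" for p
  proof -
    have "\<phi> p permutes U" unfolding \<phi>_def
      using A[OF that] EU that by (intro permutes_compose permutes_swap_id) auto
    then show ?thesis using exE[OF that] that by auto
  qed
  have invol: "\<phi> (\<phi> p) = p" if "p \<in> ?S" for p
  proof -
    have "a1 (\<phi> p) = a1 p" "a2 (\<phi> p) = a2 p" unfolding a1_def a2_def using exE[OF that] by auto
    then show ?thesis unfolding \<phi>_def[of "\<phi> p"] by (simp add: \<phi>_def transpose_twice)
  qed
  have neg: "wt U f (\<phi> p) = - wt U f p" if "p \<in> ?S" for p
  proof -
    have p: "p permutes U" using that by auto
    note a = A[OF that]
    let ?t = "transpose (a1 p) (a2 p)"
    have tU: "?t permutes U" using a EU by (intro permutes_swap_id) auto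
    have sg: "sign (\<phi> p) = - sign p" unfolding \<phi>_def
      using a by (simp add: sign_compose permutes_imp_permutation[OF fin p] permutation_swap_id sign_swap_id)
    have pa: "p (a1 p) \<in> U - X" "p (a2 p) \<in> U - X"
      using a EU permutes_in_image[OF p] by (auto simp: exits_def)
    have "(\<Prod>i\<in>U. f i (\<phi> p i)) = (\<Prod>i\<in>U. f (?t i) (p (?t i)))"
    proof (rule prod.cong[OF refl])
      fix i assume "i \<in> U"
      show "f i (\<phi> p i) = f (?t i) (p (?t i))"
        using clan a pa unfolding \<phi>_def by (auto simp: exits_def Transposition.transpose_def)
    qed
    also have "\<dots> = (\<Prod>i\<in>U. f i (p i))"
      using prod.permute[OF tU, of "\<lambda>i. f i (p i)"] by (simp add: comp_def)
    finally show ?thesis unfolding wt_def sg by simp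
  qed
  show ?thesis by (rule sum_zero_invol[of _ \<phi>]) (use phiS invol neg in auto)
qed

lemma decomp_unique:
  assumes "\<sigma> permutes X" "\<tau> permutes (U-X)" "\<sigma>' permutes X" "\<tau>' permutes (U-X)"
    and "X \<subseteq> U" and eq: "\<sigma> \<circ> \<tau> = \<sigma>' \<circ> \<tau>'"
  shows "\<sigma> = \<sigma>' \<and> \<tau> = \<tau>'"
proof -
  have e: "\<sigma> (\<tau> x) = \<sigma>' (\<tau>' x)" for x using eq by (metis comp_apply)
  have "\<sigma> x = \<sigma>' x" for x
  proof (cases "x \<in> X")
    case True
    then have "\<tau> x = x" "\<tau>' x = x" using assms permutes_not_in by (metis Diff_iff)+
    then show ?thesis using e[of x] by simp
  next
    case False
    then show ?thesis using assms permutes_not_in by metis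
  qed
  moreover have "\<tau> x = \<tau>' x" for x
  proof (cases "x \<in> U - X")
    case True
    then have "\<tau> x \<in> U - X" "\<tau>' x \<in> U - X" using assms permutes_in_image by metis+
    then have "\<sigma> (\<tau> x) = \<tau> x" "\<sigma>' (\<tau>' x) = \<tau>' x" using assms permutes_not_in by (metis Diff_iff)+
    then show ?thesis using e[of x] by simp
  next
    case False
    then show ?thesis using assms permutes_not_in by metis
  qed
  ultimately show ?thesis by auto
qed

lemma pts0:
  assumes s: "\<sigma> permutes X" and t: "\<tau> permutes (U-X)"
  shows "x \<in> X \<Longrightarrow> (\<sigma> \<circ> \<tau>) x = \<sigma> x \<and> \<sigma> x \<in> X"
    "y \<in> U - X \<Longrightarrow> (\<sigma> \<circ> \<tau>) y = \<tau> y \<and> \<tau> y \<in> U - X"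
proof -
  show "x \<in> X \<Longrightarrow> (\<sigma> \<circ> \<tau>) x = \<sigma> x \<and> \<sigma> x \<in> X"
    using permutes_not_in[OF t, of x] permutes_in_image[OF s] by auto
  show "y \<in> U - X \<Longrightarrow> (\<sigma> \<circ> \<tau>) y = \<tau> y \<and> \<tau> y \<in> U - X"
    using permutes_not_in[OF s, of "\<tau> y"] permutes_in_image[OF t, of y] by auto
qed

lemma pts1:
  assumes s: "\<sigma> permutes X" and t: "\<tau> permutes (U-X)" and a: "a \<in> X" and k: "k \<in> U - X"
  shows "x \<in> X \<Longrightarrow> x \<noteq> a \<Longrightarrow> (\<sigma> \<circ> \<tau> \<circ> transpose a k) x = \<sigma> x \<and> \<sigma> x \<in> X"
    "(\<sigma> \<circ> \<tau> \<circ> transpose a k) a = \<tau> k \<and> \<tau> k \<in> U - X"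
    "y \<in> U - X \<Longrightarrow> y \<noteq> k \<Longrightarrow> (\<sigma> \<circ> \<tau> \<circ> transpose a k) y = \<tau> y \<and> \<tau> y \<in> U - X"
    "(\<sigma> \<circ> \<tau> \<circ> transpose a k) k = \<sigma> a \<and> \<sigma> a \<in> X"
proof -
  have ak: "a \<noteq> k" using a k by auto
  show "x \<in> X \<Longrightarrow> x \<noteq> a \<Longrightarrow> (\<sigma> \<circ> \<tau> \<circ> transpose a k) x = \<sigma> x \<and> \<sigma> x \<in> X"
    using pts0[OF s t, of x] k by (auto simp: Transposition.transpose_def)
  show "(\<sigma> \<circ> \<tau> \<circ> transpose a k) a = \<tau> k \<and> \<tau> k \<in> U - X"
    using pts0[OF s t, of k] k by (auto simp: Transposition.transpose_def)
  show "y \<in> U - X \<Longrightarrow> y \<noteq> k \<Longrightarrow> (\<sigma> \<circ> \<tau> \<circ> transpose a k) y = \<tau> y \<and> \<tau> y \<in> U - X"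
    using pts0[OF s t, of y] a by (auto simp: Transposition.transpose_def)
  show "(\<sigma> \<circ> \<tau> \<circ> transpose a k) k = \<sigma> a \<and> \<sigma> a \<in> X"
    using pts0[OF s t, of a] a ak by (auto simp: Transposition.transpose_def)
qed

lemma S0_param:
  assumes fin: "finite U" and XU: "X \<subseteq> U"
  shows "(\<Sum>p\<in>{p. p permutes U \<and> card (exits X p) = 0}. h p) =
    (\<Sum>q\<in>{\<sigma>. \<sigma> permutes X} \<times> {\<tau>. \<tau> permutes (U-X)}. h (fst q \<circ> snd q))"
proof -
  let ?Q = "{\<sigma>. \<sigma> permutes X} \<times> {\<tau>. \<tau> permutes (U-X)}"
  let ?F = "\<lambda>q. fst q \<circ> snd q"
  have finE: "finite (exits X p)" for p
    using fin XU by (metis (no_types, lifting) exits_def finite_subset mem_Collect_eq subsetI)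
  have inj: "inj_on ?F ?Q"
    by (rule inj_onI) (use decomp_unique[OF _ _ _ _ XU] in \<open>auto simp: prod_eq_iff\<close>)
  have img: "?F ` ?Q = {p. p permutes U \<and> card (exits X p) = 0}"
  proof
    show "?F ` ?Q \<subseteq> {p. p permutes U \<and> card (exits X p) = 0}"
    proof clarsimp
      fix \<sigma> \<tau> assume s: "\<sigma> permutes X" and t: "\<tau> permutes (U-X)"
      have "\<sigma> \<circ> \<tau> permutes U"
        using permutes_subset[OF s XU] permutes_subset[OF t] by (intro permutes_compose) auto
      moreover have "exits X (\<sigma> \<circ> \<tau>) = {}" using pts0(1)[OF s t] by (auto simp: exits_def)
      ultimately show "\<sigma> \<circ> \<tau> permutes U \<and> card (exits X (\<sigma> \<circ> \<tau>)) = 0" by simp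
    qed
    show "{p. p permutes U \<and> card (exits X p) = 0} \<subseteq> ?F ` ?Q"
    proof clarify
      fix p assume p: "p permutes U" and c: "card (exits X p) = 0"
      have "exits X p = {}" using c finE by auto
      then have pX: "p ` X \<subseteq> X" by (auto simp: exits_def)
      note sp = split_perm[OF p fin XU pX]
      show "p \<in> ?F ` ?Q"
        by (rule image_eqI[of _ _ "((\<lambda>x. if x\<in>X then p x else x), (\<lambda>x. if x\<in>U-X then p x else x))"])
          (use sp in auto)
    qed
  qed
  show ?thesis unfolding img[symmetric] sum.reindex[OF inj] by (simp add: comp_def)
qed

lemma S1_param:
  assumes fin: "finite U" and XU: "X \<subseteq> U"
  shows "(\<Sum>p\<in>{p. p permutes U \<and> card (exits X p) = 1}. h p) =
    (\<Sum>q\<in>({\<sigma>. \<sigma> permutes X} \<times> {\<tau>. \<tau> permutes (U-X)}) \<times> (X \<times> (U - X)).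
       h (fst (fst q) \<circ> snd (fst q) \<circ> transpose (fst (snd q)) (snd (snd q))))"
proof -
  let ?Q = "({\<sigma>. \<sigma> permutes X} \<times> {\<tau>. \<tau> permutes (U-X)}) \<times> (X \<times> (U - X))"
  let ?F = "\<lambda>q. fst (fst q) \<circ> snd (fst q) \<circ> transpose (fst (snd q)) (snd (snd q))"
  have finE: "finite (exits X p)" for p
    using fin XU by (metis (no_types, lifting) exits_def finite_subset mem_Collect_eq subsetI)
  have inj: "inj_on ?F ?Q"
  proof (rule inj_onI)
    fix q q' assume qQ: "q \<in> ?Q" and q'Q: "q' \<in> ?Q" and eq0: "?F q = ?F q'"
    obtain \<sigma> \<tau> a k where q: "q = ((\<sigma>,\<tau>),(a,k))" by (metis prod.exhaust)
    obtain \<sigma>' \<tau>' a' k' where q': "q' = ((\<sigma>',\<tau>'),(a',k'))" by (metis prod.exhaust)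
    have s: "\<sigma> permutes X" and t: "\<tau> permutes (U-X)" and a: "a \<in> X" and k: "k \<in> U - X"
      using qQ q by auto
    have s': "\<sigma>' permutes X" and t': "\<tau>' permutes (U-X)" and a': "a' \<in> X" and k': "k' \<in> U - X"
      using q'Q q' by auto
    have eq: "?F ((\<sigma>, \<tau>), a, k) = ?F ((\<sigma>', \<tau>'), a', k')" using eq0 q q' by simp
    note P = pts1[OF s t a k] and P' = pts1[OF s' t' a' k']
    have aa: "a = a'"
    proof (rule ccontr)
      assume ne: "a \<noteq> a'"
      have "(\<sigma> \<circ> \<tau> \<circ> transpose a k) a' = (\<sigma>' \<circ> \<tau>' \<circ> transpose a' k') a'" using eq by simp
      moreover have "(\<sigma> \<circ> \<tau> \<circ> transpose a k) a' \<in> X" using P(1)[OF a'] ne by metis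
      moreover have "(\<sigma>' \<circ> \<tau>' \<circ> transpose a' k') a' \<notin> X" using P'(2) by simp
      ultimately show False by simp
    qed
    have kk: "k = k'"
    proof (rule ccontr)
      assume ne: "k \<noteq> k'"
      have "(\<sigma> \<circ> \<tau> \<circ> transpose a k) k' = (\<sigma>' \<circ> \<tau>' \<circ> transpose a' k') k'" using eq by simp
      moreover have "(\<sigma> \<circ> \<tau> \<circ> transpose a k) k' \<notin> X" using P(3)[OF k'] ne by simp
      moreover have "(\<sigma>' \<circ> \<tau>' \<circ> transpose a' k') k' \<in> X" using P'(4) by simp
      ultimately show False by simp
    qed
    have "\<sigma> \<circ> \<tau> = \<sigma>' \<circ> \<tau>'" using eq aa kk transpose_twice by (metis fst_conv snd_conv)
    then show "q = q'" using decomp_unique[OF s t s' t' XU] aa kk q q' by auto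
  qed
  have img: "?F ` ?Q = {p. p permutes U \<and> card (exits X p) = 1}"
  proof
    show "?F ` ?Q \<subseteq> {p. p permutes U \<and> card (exits X p) = 1}"
    proof (rule image_subsetI)
      fix q assume qQ: "q \<in> ?Q"
      obtain \<sigma> \<tau> a k where q: "q = ((\<sigma>,\<tau>),(a,k))" by (metis prod.exhaust)
      have s: "\<sigma> permutes X" and t: "\<tau> permutes (U-X)" and a: "a \<in> X" and k: "k \<in> U" "k \<notin> X"
        using qQ q by auto
      note P = pts1[OF s t a, of k]
      have "\<sigma> \<circ> \<tau> \<circ> transpose a k permutes U"
        using permutes_subset[OF s XU] permutes_subset[OF t] a k XU
        by (intro permutes_compose permutes_swap_id) auto
      moreover have "exits X (\<sigma> \<circ> \<tau> \<circ> transpose a k) = {a}"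
      proof -
        have "x \<in> exits X (\<sigma> \<circ> \<tau> \<circ> transpose a k) \<longleftrightarrow> x = a" for x
        proof (cases "x = a")
          case True
          then show ?thesis using P(2) a k by (auto simp: exits_def)
        next
          case False
          have "x \<notin> exits X (\<sigma> \<circ> \<tau> \<circ> transpose a k)"
          proof (cases "x \<in> X")
            case True
            then have "(\<sigma> \<circ> \<tau> \<circ> transpose a k) x \<in> X" using P(1)[OF _ True False] k by auto
            then show ?thesis by (simp add: exits_def)
          next
            case False
            then show ?thesis by (simp add: exits_def)
          qed
          then show ?thesis using False by simp
        qed
        then show ?thesis by auto
      qed
      ultimately show "?F q \<in> {p. p permutes U \<and> card (exits X p) = 1}" using q by simp
    qed
    show "{p. p permutes U \<and> card (exits X p) = 1} \<subseteq> ?F ` ?Q"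
    proof clarify
      fix p assume p: "p permutes U" and c: "card (exits X p) = 1"
      obtain a where ea: "exits X p = {a}" using c card_1_singletonE by blast
      have a: "a \<in> X" "p a \<notin> X" using ea by (auto simp: exits_def)
      have oth: "x \<in> X \<Longrightarrow> x \<noteq> a \<Longrightarrow> p x \<in> X" for x using ea by (auto simp: exits_def)
      define W where "W = {y\<in>U. p y \<in> X}"
      define Z where "Z = {y\<in>U-X. p y \<in> X}"
      have injp: "inj p" using p permutes_inj by blast
      have finX: "finite X" using fin XU finite_subset by blast
      have pW: "p ` W = X"
      proof
        show "p ` W \<subseteq> X" unfolding W_def by auto
        show "X \<subseteq> p ` W"
        proof
          fix x assume x: "x \<in> X"
          have "Hilbert_Choice.inv p x \<in> U" using permutes_in_image[OF permutes_inv[OF p]] x XU by auto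
          moreover have "p (Hilbert_Choice.inv p x) = x" using permutes_inverses(1)[OF p] by simp
          ultimately show "x \<in> p ` W" unfolding W_def using x by (metis (mono_tags, lifting) imageI mem_Collect_eq)
        qed
      qed
      have cW: "card W = card X" using pW injp by (metis card_image inj_on_subset subset_UNIV)
      have Wsplit: "W = (X - {a}) \<union> Z" unfolding W_def Z_def using oth a XU by auto
      have finZ: "finite Z" unfolding Z_def using fin by auto
      have "card W = card (X - {a}) + card Z"
        unfolding Wsplit by (rule card_Un_disjoint) (use finX finZ Z_def in auto)
      moreover have "card (X - {a}) = card X - 1" using finX a(1) by (simp add: card_Diff_singleton)
      moreover have "card X > 0" using finX a(1) card_gt_0_iff by blast
      ultimately have cZ: "card Z = 1" using cW by linarith
      obtain k where Zk: "Z = {k}" using cZ card_1_singletonE by blast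
      have k: "k \<in> U - X" "p k \<in> X" using Zk unfolding Z_def by auto
      define u where "u = p \<circ> transpose a k"
      have u: "u permutes U" unfolding u_def using a k XU by (intro permutes_compose[OF _ p] permutes_swap_id) auto
      have uX: "u ` X \<subseteq> X"
      proof
        fix y assume "y \<in> u ` X"
        then obtain x where x: "x \<in> X" "y = u x" by auto
        show "y \<in> X"
        proof (cases "x = a")
          case True then show ?thesis using x k by (simp add: u_def)
        next
          case False
          then have "x \<noteq> k" using x k by auto
          then show ?thesis using x oth False by (simp add: u_def Transposition.transpose_def)
        qed
      qed
      note sp = split_perm[OF u fin XU uX]
      have "p = u \<circ> transpose a k" unfolding u_def by (simp add: transpose_twice)
      then have "p = ?F (((\<lambda>x. if x\<in>X then u x else x), (\<lambda>x. if x\<in>U-X then u x else x)), (a, k))"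
        using sp(3) by simp
      moreover have "(((\<lambda>x. if x\<in>X then u x else x), (\<lambda>x. if x\<in>U-X then u x else x)), (a, k)) \<in> ?Q"
        using sp(1,2) a k by auto
      ultimately show "p \<in> ?F ` ?Q" by blast
    qed
  qed
  show ?thesis unfolding img[symmetric] sum.reindex[OF inj] by (simp add: comp_def)
qed

lemma S0_eq:
  assumes fin: "finite U" and XU: "X \<subseteq> U"
    and g: "g = (\<lambda>i j. if i \<in> X \<and> j \<in> X then f j i else f i j)"
  shows "(\<Sum>q\<in>{\<sigma>. \<sigma> permutes X} \<times> {\<tau>. \<tau> permutes (U-X)}. wt U g (fst q \<circ> snd q)) =
    (\<Sum>q\<in>{\<sigma>. \<sigma> permutes X} \<times> {\<tau>. \<tau> permutes (U-X)}. wt U f (fst q \<circ> snd q))"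
proof -
  let ?Q = "{\<sigma>. \<sigma> permutes X} \<times> {\<tau>. \<tau> permutes (U-X)}"
  define rr where "rr q = (Hilbert_Choice.inv (fst q), snd q)" for q :: "(nat \<Rightarrow> nat) \<times> (nat \<Rightarrow> nat)"
  have finX: "finite X" using fin XU finite_subset by blast
  have b: "bij_betw rr ?Q ?Q"
    by (rule bij_betw_byWitness[of _ rr rr]) (auto simp: rr_def permutes_inv permutes_inv_inv)
  have pw: "wt U g (Hilbert_Choice.inv \<sigma> \<circ> \<tau>) = wt U f (\<sigma> \<circ> \<tau>)" if s: "\<sigma> permutes X" and t: "\<tau> permutes (U-X)" for \<sigma> \<tau>
  proof -
    have si: "Hilbert_Choice.inv \<sigma> permutes X" using permutes_inv[OF s] .
    have pX: "permutation \<sigma>" "permutation (Hilbert_Choice.inv \<sigma>)" "permutation \<tau>"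
      using permutes_imp_permutation[OF finX s] permutes_imp_permutation[OF finX si]
        permutes_imp_permutation[OF _ t] fin by auto
    have sg: "sign (Hilbert_Choice.inv \<sigma> \<circ> \<tau>) = sign (\<sigma> \<circ> \<tau>)"
      using pX by (simp add: sign_compose sign_inverse)
    have "(\<Prod>i\<in>X. g i ((Hilbert_Choice.inv \<sigma> \<circ> \<tau>) i)) = (\<Prod>i\<in>X. f (Hilbert_Choice.inv \<sigma> i) i)"
      by (rule prod.cong[OF refl]) (use pts0(1)[OF si t] g in auto)
    also have "\<dots> = (\<Prod>j\<in>X. f (Hilbert_Choice.inv \<sigma> (\<sigma> j)) (\<sigma> j))"
      using prod.permute[OF s, of "\<lambda>i. f (Hilbert_Choice.inv \<sigma> i) i"] by (simp add: comp_def)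
    also have "\<dots> = (\<Prod>j\<in>X. f j ((\<sigma> \<circ> \<tau>) j))"
      by (rule prod.cong[OF refl]) (use pts0(1)[OF s t] permutes_inverses(2)[OF s] in auto)
    finally have 1: "(\<Prod>i\<in>X. g i ((Hilbert_Choice.inv \<sigma> \<circ> \<tau>) i)) = (\<Prod>j\<in>X. f j ((\<sigma> \<circ> \<tau>) j))" .
    have 2: "(\<Prod>i\<in>U-X. g i ((Hilbert_Choice.inv \<sigma> \<circ> \<tau>) i)) = (\<Prod>j\<in>U-X. f j ((\<sigma> \<circ> \<tau>) j))"
      by (rule prod.cong[OF refl]) (use pts0(2)[OF si t] pts0(2)[OF s t] g in auto)
    show ?thesis unfolding wt_def prod.subset_diff[OF XU fin] 1 2 sg by simp
  qed
  have "(\<Sum>q\<in>?Q. wt U g (fst q \<circ> snd q)) = (\<Sum>q\<in>?Q. wt U g (fst (rr q) \<circ> snd (rr q)))"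
    using sum.reindex_bij_betw[OF b, of "\<lambda>q. wt U g (fst q \<circ> snd q)"] by simp
  also have "\<dots> = (\<Sum>q\<in>?Q. wt U f (fst q \<circ> snd q))"
    by (rule sum.cong[OF refl]) (auto simp: rr_def pw)
  finally show ?thesis .
qed

lemma S1_eq:
  assumes fin: "finite U" and XU: "X \<subseteq> U"
    and clan: "\<forall>i\<in>X. \<forall>j\<in>X. \<forall>k\<in>U-X. f i k = f j k \<and> f k i = f k j"
    and g: "g = (\<lambda>i j. if i \<in> X \<and> j \<in> X then f j i else f i j)"
  shows "(\<Sum>q\<in>({\<sigma>. \<sigma> permutes X} \<times> {\<tau>. \<tau> permutes (U-X)}) \<times> (X \<times> (U - X)).
       wt U g (fst (fst q) \<circ> snd (fst q) \<circ> transpose (fst (snd q)) (snd (snd q)))) =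
    (\<Sum>q\<in>({\<sigma>. \<sigma> permutes X} \<times> {\<tau>. \<tau> permutes (U-X)}) \<times> (X \<times> (U - X)).
       wt U f (fst (fst q) \<circ> snd (fst q) \<circ> transpose (fst (snd q)) (snd (snd q))))"
proof -
  let ?Q = "({\<sigma>. \<sigma> permutes X} \<times> {\<tau>. \<tau> permutes (U-X)}) \<times> (X \<times> (U - X))"
  let ?F = "\<lambda>q. fst (fst q) \<circ> snd (fst q) \<circ> transpose (fst (snd q)) (snd (snd q))"
  define rr where "rr q = ((Hilbert_Choice.inv (fst (fst q)), snd (fst q)), (fst (fst q) (fst (snd q)), snd (snd q)))"
    for q :: "((nat \<Rightarrow> nat) \<times> (nat \<Rightarrow> nat)) \<times> (nat \<times> nat)"
  have finX: "finite X" using fin XU finite_subset by blast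
  have rrQ: "rr q \<in> ?Q \<and> rr (rr q) = q" if qQ: "q \<in> ?Q" for q
  proof -
    obtain \<sigma> \<tau> a k where q: "q = ((\<sigma>,\<tau>),(a,k))" by (metis prod.exhaust)
    have s: "\<sigma> permutes X" and t: "\<tau> permutes (U-X)" and a: "a \<in> X" and k: "k \<in> U - X"
      using qQ q by auto
    have r: "rr q = ((Hilbert_Choice.inv \<sigma>, \<tau>), (\<sigma> a, k))" unfolding rr_def q by simp
    have si: "Hilbert_Choice.inv \<sigma> permutes X" using permutes_inv[OF s] .
    have sa: "\<sigma> a \<in> X" using permutes_in_image[OF s] a by simp
    have ii: "Hilbert_Choice.inv (Hilbert_Choice.inv \<sigma>) = \<sigma>" using permutes_inv_inv[OF s] .
    have ia: "Hilbert_Choice.inv \<sigma> (\<sigma> a) = a" using permutes_inverses(2)[OF s] by simp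
    have m1: "rr q \<in> ?Q" unfolding r using si t sa k by simp
    have m2: "rr (rr q) = q" unfolding q rr_def fst_conv snd_conv ii ia by (rule refl)
    show ?thesis using m1 m2 by (rule conjI)
  qed
  have b: "bij_betw rr ?Q ?Q"
  proof (rule bij_betw_byWitness[of _ rr rr])
    show "\<forall>q\<in>?Q. rr (rr q) = q"
    proof
      fix q assume "q \<in> ?Q"
      from rrQ[OF this] show "rr (rr q) = q" by (rule conjunct2)
    qed
    then show "\<forall>q\<in>?Q. rr (rr q) = q" .
    show "rr ` ?Q \<subseteq> ?Q"
    proof (rule image_subsetI)
      fix q assume "q \<in> ?Q"
      from rrQ[OF this] show "rr q \<in> ?Q" by (rule conjunct1)
    qed
    then show "rr ` ?Q \<subseteq> ?Q" .
  qed
  have pw: "wt U g (Hilbert_Choice.inv \<sigma> \<circ> \<tau> \<circ> transpose (\<sigma> a) k) = wt U f (\<sigma> \<circ> \<tau> \<circ> transpose a k)"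
    if s: "\<sigma> permutes X" and t: "\<tau> permutes (U-X)" and a: "a \<in> X" and k: "k \<in> U - X" for \<sigma> \<tau> a k
  proof -
    have si: "Hilbert_Choice.inv \<sigma> permutes X" using permutes_inv[OF s] .
    have sa: "\<sigma> a \<in> X" using permutes_in_image[OF s] a by simp
    have isa: "Hilbert_Choice.inv \<sigma> (\<sigma> a) = a" using permutes_inverses(2)[OF s] by simp
    have pX: "permutation \<sigma>" "permutation (Hilbert_Choice.inv \<sigma>)" "permutation \<tau>"
      using permutes_imp_permutation[OF finX s] permutes_imp_permutation[OF finX si]
        permutes_imp_permutation[OF _ t] fin by auto
    have ne: "\<sigma> a \<noteq> k" "a \<noteq> k" using sa a k by auto
    have p1: "permutation (Hilbert_Choice.inv \<sigma> \<circ> \<tau>)" "permutation (\<sigma> \<circ> \<tau>)"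
      using pX by (auto intro: permutation_compose)
    have pt: "permutation (transpose (\<sigma> a) k)" "permutation (transpose a k)"
      by (rule permutation_swap_id)+
    have "sign (Hilbert_Choice.inv \<sigma> \<circ> \<tau> \<circ> transpose (\<sigma> a) k) = sign (Hilbert_Choice.inv \<sigma> \<circ> \<tau>) * sign (transpose (\<sigma> a) k)"
      by (rule sign_compose[OF p1(1) pt(1)])
    also have "\<dots> = sign \<sigma> * sign \<tau> * (-1)"
      using sign_compose[OF pX(2) pX(3)] sign_inverse[OF pX(1)] sign_swap_id[of "\<sigma> a" k] ne by simp
    also have "\<dots> = sign (\<sigma> \<circ> \<tau>) * sign (transpose a k)"
      using sign_compose[OF pX(1) pX(3)] sign_swap_id[of a k] ne by simp
    also have "\<dots> = sign (\<sigma> \<circ> \<tau> \<circ> transpose a k)"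
      by (rule sign_compose[OF p1(2) pt(2), symmetric])
    finally have sg: "sign (Hilbert_Choice.inv \<sigma> \<circ> \<tau> \<circ> transpose (\<sigma> a) k) = sign (\<sigma> \<circ> \<tau> \<circ> transpose a k)" .
    note L = pts1[OF si t sa k] and R = pts1[OF s t a k]
    have "(\<Prod>i\<in>X. g i ((Hilbert_Choice.inv \<sigma> \<circ> \<tau> \<circ> transpose (\<sigma> a) k) i)) =
        (\<Prod>i\<in>X. if i = \<sigma> a then f (\<sigma> a) (\<tau> k) else f (Hilbert_Choice.inv \<sigma> i) i)"
    proof (rule prod.cong[OF refl])
      fix i assume i: "i \<in> X"
      show "g i ((Hilbert_Choice.inv \<sigma> \<circ> \<tau> \<circ> transpose (\<sigma> a) k) i) = (if i = \<sigma> a then f (\<sigma> a) (\<tau> k) else f (Hilbert_Choice.inv \<sigma> i) i)"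
      proof (cases "i = \<sigma> a")
        case True
        have "(Hilbert_Choice.inv \<sigma> \<circ> \<tau> \<circ> transpose (\<sigma> a) k) i = \<tau> k" "\<tau> k \<notin> X"
          using L(2) True by auto
        then show ?thesis using True by (simp add: g)
      next
        case False
        have "(Hilbert_Choice.inv \<sigma> \<circ> \<tau> \<circ> transpose (\<sigma> a) k) i = Hilbert_Choice.inv \<sigma> i"
          "Hilbert_Choice.inv \<sigma> i \<in> X"
          using L(1)[OF i False] by auto
        then show ?thesis using False i by (simp add: g)
      qed
    qed
    also have "\<dots> = (\<Prod>j\<in>X. if \<sigma> j = \<sigma> a then f (\<sigma> a) (\<tau> k) else f (Hilbert_Choice.inv \<sigma> (\<sigma> j)) (\<sigma> j))"
      using prod.permute[OF s, of "\<lambda>i. if i = \<sigma> a then f (\<sigma> a) (\<tau> k) else f (Hilbert_Choice.inv \<sigma> i) i"] by (simp add: comp_def)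
    also have "\<dots> = (\<Prod>j\<in>X. f j ((\<sigma> \<circ> \<tau> \<circ> transpose a k) j))"
    proof (rule prod.cong[OF refl])
      fix j assume j: "j \<in> X"
      have inj: "\<sigma> j = \<sigma> a \<longleftrightarrow> j = a" using permutes_inj[OF s] by (meson injD)
      show "(if \<sigma> j = \<sigma> a then f (\<sigma> a) (\<tau> k) else f (Hilbert_Choice.inv \<sigma> (\<sigma> j)) (\<sigma> j)) = f j ((\<sigma> \<circ> \<tau> \<circ> transpose a k) j)"
      proof (cases "j = a")
        case True
        have e: "(\<sigma> \<circ> \<tau> \<circ> transpose a k) j = \<tau> k" "\<tau> k \<in> U - X" using R(2) True by auto
        have "f (\<sigma> a) (\<tau> k) = f a (\<tau> k)" using clan sa a e(2) by blast
        then show ?thesis using True e by simp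
      next
        case False
        have e: "(\<sigma> \<circ> \<tau> \<circ> transpose a k) j = \<sigma> j" using R(1)[OF j False] by blast
        have "Hilbert_Choice.inv \<sigma> (\<sigma> j) = j" using permutes_inverses(2)[OF s] by simp
        then show ?thesis using False inj e by simp
      qed
    qed
    finally have 1: "(\<Prod>i\<in>X. g i ((Hilbert_Choice.inv \<sigma> \<circ> \<tau> \<circ> transpose (\<sigma> a) k) i)) =
        (\<Prod>j\<in>X. f j ((\<sigma> \<circ> \<tau> \<circ> transpose a k) j))" .
    have 2: "(\<Prod>i\<in>U-X. g i ((Hilbert_Choice.inv \<sigma> \<circ> \<tau> \<circ> transpose (\<sigma> a) k) i)) = (\<Prod>j\<in>U-X. f j ((\<sigma> \<circ> \<tau> \<circ> transpose a k) j))"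
    proof (rule prod.cong[OF refl])
      fix y assume y: "y \<in> U - X"
      show "g y ((Hilbert_Choice.inv \<sigma> \<circ> \<tau> \<circ> transpose (\<sigma> a) k) y) = f y ((\<sigma> \<circ> \<tau> \<circ> transpose a k) y)"
      proof (cases "y = k")
        case True
        have e: "(Hilbert_Choice.inv \<sigma> \<circ> \<tau> \<circ> transpose (\<sigma> a) k) y = a"
          "(\<sigma> \<circ> \<tau> \<circ> transpose a k) y = \<sigma> a"
          using L(4) R(4) isa True by auto
        have "f k (\<sigma> a) = f k a" using clan sa a k by blast
        then show ?thesis using e y True by (simp add: g)
      next
        case False
        have e: "(Hilbert_Choice.inv \<sigma> \<circ> \<tau> \<circ> transpose (\<sigma> a) k) y = \<tau> y"
          "(\<sigma> \<circ> \<tau> \<circ> transpose a k) y = \<tau> y"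
          using L(3)[OF y False] R(3)[OF y False] by auto
        then show ?thesis using y by (simp add: g)
      qed
    qed
    show ?thesis unfolding wt_def prod.subset_diff[OF XU fin] 1 2 sg by simp
  qed
  have "(\<Sum>q\<in>?Q. wt U g (?F q)) = (\<Sum>q\<in>?Q. wt U g (?F (rr q)))"
    using sum.reindex_bij_betw[OF b, of "\<lambda>q. wt U g (?F q)"] by simp
  also have "\<dots> = (\<Sum>q\<in>?Q. wt U f (?F q))"
    by (rule sum.cong[OF refl]) (auto simp: rr_def pw)
  finally show ?thesis .
qed

lemma main_perm:
  assumes fin: "finite U" and XU: "X \<subseteq> U"
    and clan: "\<forall>i\<in>X. \<forall>j\<in>X. \<forall>k\<in>U-X. f i k = f j k \<and> f k i = f k j"
    and g: "g = (\<lambda>i j. if i \<in> X \<and> j \<in> X then f j i else f i j)"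
  shows "(\<Sum>p\<in>{p. p permutes U}. wt U g p) = (\<Sum>p\<in>{p. p permutes U}. wt U f p)"
proof -
  let ?S0 = "{p. p permutes U \<and> card (exits X p) = 0}"
  let ?S1 = "{p. p permutes U \<and> card (exits X p) = 1}"
  let ?S2 = "{p. p permutes U \<and> 2 \<le> card (exits X p)}"
  have P: "{p. p permutes U} = (?S0 \<union> ?S1) \<union> ?S2" by auto
  have fP: "finite {p. p permutes U}" using finite_permutations[OF fin] .
  have split: "(\<Sum>p\<in>{p. p permutes U}. h p) = (\<Sum>p\<in>?S0. h p) + (\<Sum>p\<in>?S1. h p) + (\<Sum>p\<in>?S2. h p)" for h :: "(nat \<Rightarrow> nat) \<Rightarrow> real"
  proof -
    have f0: "finite ?S0" "finite ?S1" "finite ?S2" using fP by (auto intro: finite_subset)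
    have "(\<Sum>p\<in>{p. p permutes U}. h p) = (\<Sum>p\<in>?S0 \<union> ?S1. h p) + (\<Sum>p\<in>?S2. h p)"
      unfolding P by (rule sum.union_disjoint) (use f0 in auto)
    also have "(\<Sum>p\<in>?S0 \<union> ?S1. h p) = (\<Sum>p\<in>?S0. h p) + (\<Sum>p\<in>?S1. h p)"
      by (rule sum.union_disjoint) (use f0 in auto)
    finally show ?thesis .
  qed
  have clan1: "\<forall>i\<in>X. \<forall>j\<in>X. \<forall>k\<in>U-X. f i k = f j k" using clan by blast
  have clang: "\<forall>i\<in>X. \<forall>j\<in>X. \<forall>k\<in>U-X. g i k = g j k"
  proof (intro ballI)
    fix i j k assume i: "i \<in> X" and j: "j \<in> X" and k: "k \<in> U - X"
    have "g i k = f i k" "g j k = f j k" using k by (simp_all add: g)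
    moreover have "f i k = f j k" using clan1 i j k by blast
    ultimately show "g i k = g j k" by simp
  qed
  show ?thesis
    using split[of "wt U g"] split[of "wt U f"] cancel[OF fin XU clan1] cancel[OF fin XU clang]
      S0_param[OF fin XU, of "wt U g"] S0_param[OF fin XU, of "wt U f"]
      S1_param[OF fin XU, of "wt U g"] S1_param[OF fin XU, of "wt U f"]
      S0_eq[OF fin XU g] S1_eq[OF fin XU clan g] by linarith
qed

lemma det_as_wt:
  "det (mat m m (\<lambda>(i,j). h i j)) = (\<Sum>p\<in>{p. p permutes {0..<m}}. wt {0..<m} h p)"
proof -
  have "det (mat m m (\<lambda>(i,j). h i j)) = (\<Sum>p\<in>{p. p permutes {0..<m}}.
      signof p * (\<Prod>i = 0..<m. mat m m (\<lambda>(i,j). h i j) $$ (i, p i)))"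
    by (rule det_def') simp
  also have "\<dots> = (\<Sum>p\<in>{p. p permutes {0..<m}}. wt {0..<m} h p)"
  proof (rule sum.cong[OF refl])
    fix p assume "p \<in> {p. p permutes {0..<m}}"
    then have p: "p permutes {0..<m}" by simp
    have "(\<Prod>i = 0..<m. mat m m (\<lambda>(i,j). h i j) $$ (i, p i)) = (\<Prod>i = 0..<m. h i (p i))"
      by (rule prod.cong[OF refl]) (use permutes_in_image[OF p] in auto)
    then show "signof p * (\<Prod>i = 0..<m. mat m m (\<lambda>(i,j). h i j) $$ (i, p i)) = wt {0..<m} h p"
      by (simp add: wt_def)
  qed
  finally show ?thesis .
qed

theorem lemma5p1:
  fixes n :: nat and A :: "real mat" and X :: "nat set"
  assumes "gen_tournament n A"
    and "clan n A X"
  shows "\<forall>Y. Y \<noteq> {} \<and> Y \<subseteq> {0..<n} \<longrightarrow>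
           det (principal_submatrix (Inv A X) Y) = det (principal_submatrix A Y)"
proof (intro allI impI)
  fix Y assume Y: "Y \<noteq> {} \<and> Y \<subseteq> {0..<n}"
  have A: "A \<in> carrier_mat n n" using assms(1) unfolding gen_tournament_def by blast
  then have dA: "dim_row A = n" "dim_col A = n" by auto
  have cl: "\<forall>i\<in>X. \<forall>j\<in>X. \<forall>k\<in>{0..<n} - X. A $$ (i,k) = A $$ (j,k) \<and> A $$ (k,i) = A $$ (k,j)"
    using assms(2) unfolding clan_def by blast
  define m where "m = card {i. i < n \<and> i \<in> Y}"
  define f where "f i j = A $$ (pick Y i, pick Y j)" for i j
  define X' where "X' = {i\<in>{0..<m}. pick Y i \<in> X}"
  define g where "g = (\<lambda>i j. if i \<in> X' \<and> j \<in> X' then f j i else f i j)"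
  have pk: "pick Y i < n" if "i < m" for i using pick_le[of i n Y] that unfolding m_def by simp
  have S: "principal_submatrix A Y = mat m m (\<lambda>(i,j). f i j)"
    by (rule eq_matI) (auto simp: principal_submatrix_def submatrix_def m_def f_def dA)
  have SI: "principal_submatrix (Inv A X) Y = mat m m (\<lambda>(i,j). g i j)"
  proof (rule eq_matI)
    show "dim_row (principal_submatrix (Inv A X) Y) = dim_row (mat m m (\<lambda>(i,j). g i j))"
      by (simp add: principal_submatrix_def submatrix_def Inv_def dA m_def)
    show "dim_col (principal_submatrix (Inv A X) Y) = dim_col (mat m m (\<lambda>(i,j). g i j))"
      by (simp add: principal_submatrix_def submatrix_def Inv_def dA m_def)
    fix i j assume i: "i < dim_row (mat m m (\<lambda>(i,j). g i j))" and j: "j < dim_col (mat m m (\<lambda>(i,j). g i j))"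
    then have i': "i < m" and j': "j < m" by auto
    have "principal_submatrix (Inv A X) Y $$ (i,j) = Inv A X $$ (pick Y i, pick Y j)"
      using i' j' by (simp add: principal_submatrix_def submatrix_def Inv_def dA m_def)
    also have "\<dots> = (if pick Y i \<in> X \<and> pick Y j \<in> X then A $$ (pick Y j, pick Y i) else A $$ (pick Y i, pick Y j))"
      using pk[OF i'] pk[OF j'] by (simp add: Inv_def dA)
    also have "\<dots> = g i j" using i' j' by (simp add: g_def X'_def f_def)
    finally show "principal_submatrix (Inv A X) Y $$ (i,j) = mat m m (\<lambda>(i,j). g i j) $$ (i,j)"
      using i' j' by simp
  qed
  have XU: "X' \<subseteq> {0..<m}" unfolding X'_def by auto
  have clan': "\<forall>i\<in>X'. \<forall>j\<in>X'. \<forall>k\<in>{0..<m}-X'. f i k = f j k \<and> f k i = f k j"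
  proof (intro ballI)
    fix i j k assume i: "i \<in> X'" and j: "j \<in> X'" and k: "k \<in> {0..<m} - X'"
    have "pick Y i \<in> X" "pick Y j \<in> X" using i j unfolding X'_def by auto
    moreover have "pick Y k \<in> {0..<n} - X" using k pk unfolding X'_def by auto
    ultimately show "f i k = f j k \<and> f k i = f k j" unfolding f_def using cl by blast
  qed
  have "det (mat m m (\<lambda>(i,j). g i j)) = det (mat m m (\<lambda>(i,j). f i j))"
    unfolding det_as_wt by (rule main_perm[OF _ XU clan' g_def]) simp
  then show "det (principal_submatrix (Inv A X) Y) = det (principal_submatrix A Y)"
    unfolding S SI .
qed

end
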